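(* Let $H$ be a graph on $m\le n$ vertices, regarded as a subgraph of $K_n$ on $m$ of its vertices. If there exists a $(v,k,1)$-design with $k\ge m$ and $v-k\ge n-m$, then \[\operatorname{scp}(K_n-H)\ \le\ \frac{n(v-1)}{k-1}+\operatorname{scp}(\overline{H})-m.\]
   Context: A $(v,k,1)$-design (with $k\ge 2$) is a pair $(P,\mathcal{B})$ where $|P|=v$ and $\mathcal{B}$ is a collection of $k$-subsets of $P$ such that every two distinct points lie in exactly one block. $\overline{H}$ is the complement of $H$ on its own $m$ vertices; $K_n-H$ is obtained from $K_n$ by deleting the edges of $H$. $\operatorname{scp}(G)$ is the minimum, over all families of cliques of $G$ covering each edge exactly once, of the sum of the clique sizes. *)

theory Defs
  imports Complex_Main
begin

definition all_edges :: "'a set \<Rightarrow> 'a set set" where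
  "all_edges V = {{x, y} | x y. x \<in> V \<and> y \<in> V \<and> x \<noteq> y}"

definition is_graph :: "'a set \<Rightarrow> 'a set set \<Rightarrow> bool" where
  "is_graph V E \<longleftrightarrow> finite V \<and> E \<subseteq> all_edges V"

definition is_clique :: "'a set \<Rightarrow> 'a set set \<Rightarrow> 'a set \<Rightarrow> bool" where
  "is_clique V E C \<longleftrightarrow> C \<subseteq> V \<and> (\<forall>x\<in>C. \<forall>y\<in>C. x \<noteq> y \<longrightarrow> {x, y} \<in> E)"

definition is_clique_partition :: "'a set \<Rightarrow> 'a set set \<Rightarrow> 'a set set \<Rightarrow> bool" where
  "is_clique_partition V E F \<longleftrightarrow> finite F \<and> (\<forall>C\<in>F. is_clique V E C) \<and>
     (\<forall>e\<in>E. \<exists>!C. C \<in> F \<and> e \<subseteq> C)"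

definition scp :: "'a set \<Rightarrow> 'a set set \<Rightarrow> nat" where
  "scp V E = Inf {\<Sum>C\<in>F. card C | F. is_clique_partition V E F}"

definition is_design :: "'b set \<Rightarrow> 'b set set \<Rightarrow> nat \<Rightarrow> nat \<Rightarrow> bool" where
  "is_design P B v k \<longleftrightarrow> finite P \<and> card P = v \<and> 2 \<le> k \<and>
     (\<forall>b\<in>B. b \<subseteq> P \<and> card b = k) \<and>
     (\<forall>x\<in>P. \<forall>y\<in>P. x \<noteq> y \<longrightarrow> (\<exists>!b. b \<in> B \<and> x \<in> b \<and> y \<in> b))"

end

theory Submission
  imports Defs
begin

lemma scp_le:
  assumes "is_clique_partition V E F"
  shows "scp V E \<le> (\<Sum>C\<in>F. card C)"
  unfolding scp_def using assms by (intro cInf_lower) auto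

lemma scp_attained:
  assumes "is_clique_partition V E F0"
  shows "\<exists>F. is_clique_partition V E F \<and> scp V E = (\<Sum>C\<in>F. card C)"
proof -
  have "{\<Sum>C\<in>F. card C | F. is_clique_partition V E F} \<noteq> {}" using assms by auto
  from Inf_nat_def1[OF this] show ?thesis unfolding scp_def by auto
qed

lemma edge_partition:
  assumes "finite M"
  shows "is_clique_partition M (all_edges M - EH) (all_edges M - EH)"
proof -
  have fin: "finite (all_edges M - EH)"
  proof -
    have "all_edges M \<subseteq> Pow M" unfolding all_edges_def by auto
    thus ?thesis using assms by (meson finite_Diff finite_Pow_iff rev_finite_subset)
  qed
  have cl: "is_clique M (all_edges M - EH) C" if "C \<in> all_edges M - EH" for C
  proof -
    from that obtain x y where C: "C = {x,y}" "x \<in> M" "y \<in> M" "x \<noteq> y"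
      unfolding all_edges_def by auto
    show ?thesis unfolding is_clique_def using that C by (auto simp: insert_commute)
  qed
  have un: "\<exists>!C. C \<in> all_edges M - EH \<and> e \<subseteq> C" if "e \<in> all_edges M - EH" for e
  proof (rule ex1I[of _ e])
    show "e \<in> all_edges M - EH \<and> e \<subseteq> e" using that by auto
  next
    fix C assume C: "C \<in> all_edges M - EH \<and> e \<subseteq> C"
    from that obtain x y where e: "e = {x,y}" "x \<noteq> y" unfolding all_edges_def by auto
    from C obtain a b where "C = {a,b}" unfolding all_edges_def by auto
    thus "C = e" using C e by auto
  qed
  show ?thesis unfolding is_clique_partition_def using fin cl un by blast
qed

lemma replication:
  assumes D: "is_design P B v k" and p: "p \<in> P"
  shows "card {b\<in>B. p \<in> b} * (k - 1) = v - 1"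
proof -
  have finP: "finite P" and cP: "card P = v" and blk: "\<And>b. b \<in> B \<Longrightarrow> b \<subseteq> P \<and> card b = k"
    and pair: "\<And>x y. x \<in> P \<Longrightarrow> y \<in> P \<Longrightarrow> x \<noteq> y \<Longrightarrow> \<exists>!b. b \<in> B \<and> x \<in> b \<and> y \<in> b"
    using D unfolding is_design_def by auto
  define Bp where "Bp = {b\<in>B. p \<in> b}"
  have "B \<subseteq> Pow P" using blk by auto
  hence finB: "finite B" using finP finite_subset by blast
  hence finBp: "finite Bp" unfolding Bp_def by auto
  have U: "(\<Union>b\<in>Bp. b - {p}) = P - {p}"
  proof
    show "(\<Union>b\<in>Bp. b - {p}) \<subseteq> P - {p}" using blk unfolding Bp_def by auto
    show "P - {p} \<subseteq> (\<Union>b\<in>Bp. b - {p})"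
    proof
      fix y assume "y \<in> P - {p}"
      then obtain b where "b \<in> B" "p \<in> b" "y \<in> b" using pair[of p y] p by auto
      thus "y \<in> (\<Union>b\<in>Bp. b - {p})" using \<open>y \<in> P - {p}\<close> unfolding Bp_def by auto
    qed
  qed
  have "card (\<Union>b\<in>Bp. b - {p}) = (\<Sum>b\<in>Bp. card (b - {p}))"
  proof (rule card_UN_disjoint[OF finBp])
    show "\<forall>b\<in>Bp. finite (b - {p})" using blk finP finite_subset unfolding Bp_def by blast
    show "\<forall>b\<in>Bp. \<forall>c\<in>Bp. b \<noteq> c \<longrightarrow> (b - {p}) \<inter> (c - {p}) = {}"
    proof (intro ballI impI)
      fix b c assume "b \<in> Bp" "c \<in> Bp" "b \<noteq> c"
      show "(b - {p}) \<inter> (c - {p}) = {}"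
      proof (rule ccontr)
        assume "(b - {p}) \<inter> (c - {p}) \<noteq> {}"
        then obtain y where y: "y \<in> b" "y \<in> c" "y \<noteq> p" by auto
        have "y \<in> P" using y \<open>b \<in> Bp\<close> blk unfolding Bp_def by auto
        from pair[OF p this] y \<open>b \<in> Bp\<close> \<open>c \<in> Bp\<close> \<open>b \<noteq> c\<close> show False unfolding Bp_def by auto
      qed
    qed
  qed
  also have "\<dots> = (\<Sum>b\<in>Bp. k - 1)"
    by (rule sum.cong) (auto simp: Bp_def blk)
  finally have "card (P - {p}) = card Bp * (k - 1)" using U by simp
  thus ?thesis using cP p finP Bp_def by simp
qed

theorem mainTheorem10:
  fixes V M :: "'a set" and EH :: "'a set set" and n m v k :: nat
  assumes "finite V" and "card V = n"
    and "M \<subseteq> V" and "card M = m"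
    and "is_graph M EH"
    and "\<exists>(P :: nat set) B. is_design P B v k"
    and "k \<ge> m"
    and "int v - int k \<ge> int n - int m"
  shows "real (scp V (all_edges V - EH))
           \<le> real n * (real v - 1) / (real k - 1) + real (scp M (all_edges M - EH)) - real m"
proof -
  obtain P :: "nat set" and B where D: "is_design P B v k" using assms(6) by blast
  have finP: "finite P" and cP: "card P = v" and k2: "2 \<le> k"
    and blk: "\<And>b. b \<in> B \<Longrightarrow> b \<subseteq> P \<and> card b = k"
    and pair: "\<And>x y. x \<in> P \<Longrightarrow> y \<in> P \<Longrightarrow> x \<noteq> y \<Longrightarrow> \<exists>!b. b \<in> B \<and> x \<in> b \<and> y \<in> b"
    using D unfolding is_design_def by auto
  have finM: "finite M" using assms(1,3) finite_subset by blast
  have mn: "m \<le> n" using assms(1-4) card_mono by blast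
  have v2: "v \<ge> 2" using assms(8) mn k2 by linarith
  obtain p q where pq: "p \<in> P" "q \<in> P" "p \<noteq> q"
  proof -
    have "card P \<ge> 2" using cP v2 by simp
    then obtain S where "S \<subseteq> P" "card S = 2" by (meson obtain_subset_with_card_n)
    then obtain a b where "S = {a,b}" "a \<noteq> b" by (meson card_2_iff)
    thus ?thesis using that \<open>S \<subseteq> P\<close> by auto
  qed
  obtain b0 where b0: "b0 \<in> B" using pair[OF pq] by auto
  have "B \<subseteq> Pow P" using blk by auto
  hence finB: "finite B" using finP finite_subset by blast
  have cb0: "card b0 = k" and b0P: "b0 \<subseteq> P" using blk b0 by auto
  have finb0: "finite b0" using b0P finP finite_subset by blast
  obtain g1 where g1: "g1 ` M \<subseteq> b0" "inj_on g1 M"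
    using card_le_inj[OF finM finb0] cb0 assms(4,7) by auto
  have "card (V - M) \<le> card (P - b0)"
    using card_Diff_subset[OF finM assms(3)] card_Diff_subset[OF finb0 b0P] assms cb0 cP by simp
  then obtain g2 where g2: "g2 ` (V - M) \<subseteq> P - b0" "inj_on g2 (V - M)"
    using card_le_inj[of "V - M" "P - b0"] assms(1) finP by auto
  define \<phi> where "\<phi> x = (if x \<in> M then g1 x else g2 x)" for x
  have \<phi>P: "\<phi> x \<in> P" if "x \<in> V" for x using that g1 g2 b0P unfolding \<phi>_def by auto
  have \<phi>M: "x \<in> V \<Longrightarrow> (\<phi> x \<in> b0) = (x \<in> M)" for x using g1 g2 unfolding \<phi>_def by auto
  have \<phi>inj: "inj_on \<phi> V"
  proof (rule inj_onI)
    fix x y assume xy: "x \<in> V" "y \<in> V" "\<phi> x = \<phi> y"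
    then have "(x \<in> M) = (y \<in> M)" using \<phi>M by metis
    thus "x = y" using xy g1 g2 unfolding \<phi>_def inj_on_def by (auto split: if_splits)
  qed
  define E where "E = all_edges V - EH"
  have EHM: "EH \<subseteq> all_edges M" using assms(5) unfolding is_graph_def by auto
  obtain F' where F': "is_clique_partition M (all_edges M - EH) F'"
    "scp M (all_edges M - EH) = (\<Sum>C\<in>F'. card C)"
    using scp_attained[OF edge_partition[OF finM]] by blast
  define Cb where "Cb b = {x\<in>V. \<phi> x \<in> b}" for b
  define F where "F = Cb ` (B - {b0}) \<union> F'"
  have F'sub: "\<And>C. C \<in> F' \<Longrightarrow> C \<subseteq> M" using F'(1) unfolding is_clique_partition_def is_clique_def by auto
  have same_block: "b = b0" if "b \<in> B" "x \<in> M" "y \<in> M" "x \<noteq> y" "\<phi> x \<in> b" "\<phi> y \<in> b" for b x y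
  proof -
    have xV: "x \<in> V" "y \<in> V" using that assms(3) by auto
    have ne: "\<phi> x \<noteq> \<phi> y" using \<phi>inj xV that(4) inj_on_def by metis
    have "\<phi> x \<in> b0" "\<phi> y \<in> b0" using \<phi>M xV that by auto
    thus ?thesis using pair[OF \<phi>P[OF xV(1)] \<phi>P[OF xV(2)] ne] that b0 by blast
  qed
  have part: "is_clique_partition V E F"
    unfolding is_clique_partition_def
  proof (intro conjI ballI)
    show "finite F" unfolding F_def using finB F'(1) unfolding is_clique_partition_def by auto
  next
    fix C assume "C \<in> F"
    then consider b where "b \<in> B - {b0}" "C = Cb b" | "C \<in> F'" unfolding F_def by auto
    then show "is_clique V E C"
    proof cases
      case 1
      show ?thesis unfolding is_clique_def
      proof (intro conjI ballI impI)
        show "C \<subseteq> V" using 1 unfolding Cb_def by auto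
        fix x y assume xy: "x \<in> C" "y \<in> C" "x \<noteq> y"
        have "{x,y} \<in> all_edges V" using xy 1 unfolding Cb_def all_edges_def by auto
        moreover have "{x,y} \<notin> EH"
        proof
          assume "{x,y} \<in> EH"
          then have "{x,y} \<in> all_edges M" using EHM by auto
          then have "x \<in> M" "y \<in> M" unfolding all_edges_def by (auto simp: doubleton_eq_iff)
          then show False using same_block[of b x y] xy 1 unfolding Cb_def by auto
        qed
        ultimately show "{x,y} \<in> E" unfolding E_def by auto
      qed
    next
      case 2
      then have "is_clique M (all_edges M - EH) C" using F'(1) unfolding is_clique_partition_def by auto
      moreover have "all_edges M \<subseteq> all_edges V" using assms(3) unfolding all_edges_def by blast
      ultimately show ?thesis unfolding is_clique_def E_def using assms(3) by blast
    qed
  next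
    fix e assume "e \<in> E"
    then obtain x y where e: "e = {x,y}" "x \<in> V" "y \<in> V" "x \<noteq> y" "e \<notin> EH"
      unfolding E_def all_edges_def by auto
    show "\<exists>!C. C \<in> F \<and> e \<subseteq> C"
    proof (cases "x \<in> M \<and> y \<in> M")
      case True
      have eM: "e \<in> all_edges M - EH" using e True unfolding all_edges_def by auto
      then obtain C where C: "C \<in> F'" "e \<subseteq> C" and Cu: "\<And>C'. C' \<in> F' \<and> e \<subseteq> C' \<Longrightarrow> C' = C"
        using F'(1) unfolding is_clique_partition_def by metis
      show ?thesis
      proof (rule ex1I[of _ C])
        show "C \<in> F \<and> e \<subseteq> C" using C unfolding F_def by auto
      next
        fix C' assume C': "C' \<in> F \<and> e \<subseteq> C'"
        have "C' \<in> F'"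
        proof (rule ccontr)
          assume "C' \<notin> F'"
          then obtain b where "b \<in> B - {b0}" "C' = Cb b" using C' unfolding F_def by auto
          then show False using same_block[of b x y] C' e True unfolding Cb_def by auto
        qed
        thus "C' = C" using Cu C' by auto
      qed
    next
      case False
      have ne: "\<phi> x \<noteq> \<phi> y" using \<phi>inj e inj_on_def by metis
      obtain b where b: "b \<in> B" "\<phi> x \<in> b" "\<phi> y \<in> b"
        and bu: "\<And>b'. b' \<in> B \<and> \<phi> x \<in> b' \<and> \<phi> y \<in> b' \<Longrightarrow> b' = b"
        using pair[OF \<phi>P[OF e(2)] \<phi>P[OF e(3)] ne] by metis
      have "b \<noteq> b0" using False b \<phi>M e by auto
      show ?thesis
      proof (rule ex1I[of _ "Cb b"])
        show "Cb b \<in> F \<and> e \<subseteq> Cb b" using b \<open>b \<noteq> b0\<close> e unfolding F_def Cb_def by auto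
      next
        fix C' assume C': "C' \<in> F \<and> e \<subseteq> C'"
        have "C' \<notin> F'" using F'sub C' e False by blast
        then obtain b' where "b' \<in> B - {b0}" "C' = Cb b'" using C' unfolding F_def by auto
        then have "b' = b" using bu C' e unfolding Cb_def by auto
        thus "C' = Cb b" using \<open>C' = Cb b'\<close> by simp
      qed
    qed
  qed
  have s1: "scp V E \<le> (\<Sum>C\<in>F. card C)" by (rule scp_le[OF part])
  have finF': "finite F'" using F'(1) unfolding is_clique_partition_def by auto
  have s2: "(\<Sum>C\<in>F. card C) \<le> (\<Sum>C\<in>Cb ` (B - {b0}). card C) + (\<Sum>C\<in>F'. card C)"
    unfolding F_def using sum.union_inter[of "Cb ` (B - {b0})" F' card] finB finF' by simp
  have s3: "(\<Sum>C\<in>Cb ` (B - {b0}). card C) \<le> (\<Sum>b\<in>B - {b0}. card (Cb b))"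
    using sum_image_le[of "B - {b0}" card Cb] finB by auto
  define r where "r = card {b\<in>B. p \<in> b}"
  have rep: "\<And>x. x \<in> P \<Longrightarrow> card {b\<in>B. x \<in> b} = r"
  proof -
    fix x assume "x \<in> P"
    have "card {b\<in>B. x \<in> b} * (k - 1) = card {b\<in>B. p \<in> b} * (k - 1)"
      using replication[OF D \<open>x \<in> P\<close>] replication[OF D pq(1)] by simp
    thus "card {b\<in>B. x \<in> b} = r" using k2 r_def by simp
  qed
  have rk: "r * (k - 1) = v - 1" using replication[OF D pq(1)] r_def by simp
  have cardCb: "card (Cb b) = (\<Sum>x\<in>V. if \<phi> x \<in> b then 1 else 0)" for b
    unfolding Cb_def using sum.inter_filter[OF assms(1), of "\<lambda>_. 1::nat" "\<lambda>x. \<phi> x \<in> b"] by simp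
  have "(\<Sum>b\<in>B. card (Cb b)) = (\<Sum>b\<in>B. \<Sum>x\<in>V. if \<phi> x \<in> b then 1 else (0::nat))"
    using cardCb by simp
  also have "\<dots> = (\<Sum>x\<in>V. \<Sum>b\<in>B. if \<phi> x \<in> b then 1 else (0::nat))" by (rule sum.swap)
  also have "\<dots> = (\<Sum>x\<in>V. card {b\<in>B. \<phi> x \<in> b})"
  proof (rule sum.cong[OF refl])
    fix x show "(\<Sum>b\<in>B. if \<phi> x \<in> b then 1 else (0::nat)) = card {b\<in>B. \<phi> x \<in> b}"
      using sum.inter_filter[OF finB, of "\<lambda>_. 1::nat" "\<lambda>b. \<phi> x \<in> b"] by simp
  qed
  also have "\<dots> = (\<Sum>x\<in>V. r)" using rep \<phi>P by simp
  finally have tot: "(\<Sum>b\<in>B. card (Cb b)) = n * r" using assms(2) by simp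
  have cb0M: "card (Cb b0) = m"
  proof -
    have "Cb b0 = M" unfolding Cb_def using \<phi>M assms(3) by auto
    thus ?thesis using assms(4) by simp
  qed
  have split: "(\<Sum>b\<in>B. card (Cb b)) = card (Cb b0) + (\<Sum>b\<in>B - {b0}. card (Cb b))"
    using finB b0 by (simp add: sum.remove)
  hence s4: "(\<Sum>b\<in>B - {b0}. card (Cb b)) = n * r - m" using tot cb0M by simp
  have nrm: "n * r \<ge> m" using tot cb0M split by linarith
  have main: "scp V E \<le> n * r - m + scp M (all_edges M - EH)" using s1 s2 s3 s4 F'(2) by linarith
  have rreal: "real r = (real v - 1) / (real k - 1)"
  proof -
    have "real r * (real k - 1) = real v - 1" using rk k2 v2
      by (metis of_nat_1 of_nat_diff of_nat_mult one_le_numeral order_trans)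
    thus ?thesis using k2 by (simp add: field_simps)
  qed
  have "real (scp V E) \<le> real (n * r - m) + real (scp M (all_edges M - EH))"
    using main by linarith
  also have "real (n * r - m) = real n * real r - real m" using nrm by (simp add: of_nat_diff)
  finally show ?thesis unfolding E_def rreal by (simp add: times_divide_eq_right)
qed

end
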